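(* Let $X$ be a set and $B=(B,+,0)$ a unitary magma. For every retraction point $\mathcal A=(A,k,q,s,p)$ from $X$ to $B$, define $\Phi(\mathcal A)\colon X\times B\times X\times B\to X$ by $$\Phi(\mathcal A)(x,b,x',b')=q\big((k(x)+s(b))+(k(x')+s(b'))\big).$$ Then $\Phi(\mathcal A)\in\mathbf{Act}(X,B)$, and for any two retraction points $\mathcal A,\mathcal A'$ from $X$ to $B$ one has $\mathcal A\sim\mathcal A'$ if and only if $\Phi(\mathcal A)=\Phi(\mathcal A')$. Consequently $\Phi$ induces a bijection $$\mathbf{Ptr}(X,B)/\!\sim\;\cong\;\mathbf{Act}(X,B).$$
   Context: A unitary magma is a set with a binary operation $+$ and an element $0$ with $b+0=b=0+b$ for all $b$; morphisms preserve $+$ and $0$. Given a set $X$ and a unitary magma $B=(B,+,0)$, a retraction point from $X$ to $B$ is a tuple $(A,k,q,s,p)$ where $A=(A,+,0)$ is a unitary magma, $k\colon X\to A$ and $q\colon A\to X$ are maps, $s\colon B\to A$ and $p\colon A\to B$ are morphisms of unitary magmas, and $p(s(b))=b$, $q(k(x))=x$, $p(k(x))=0$, $q(s(b))=q(0)$, and $k(q(a))+s(p(a))=a$ for all $x\in X$, $b\in B$, $a\in A$. $\mathbf{Ptr}(X,B)$ denotes the collection of all retraction points from $X$ to $B$. Two retraction points $(A,k,q,s,p)$ and $(A',k',q',s',p')$ from $X$ to $B$ are equivalent, written $\sim$, if there is a morphism of unitary magmas $\alpha\colon A\to A'$ with $\alpha k=k'$, $\alpha s=s'$ and $q'\alpha=q$.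 A $B$-action is a pair $(X,\varphi)$ with $X$ a set and $\varphi\colon X\times B\times X\times B\to X$ a map such that: (1) there is an element $0\in X$ with $\varphi(x,0,0,0)=x=\varphi(0,0,x,0)$ for all $x\in X$; (2) $\varphi(x,b,0,0)=\varphi(x,0,0,b)=\varphi(0,0,x,b)$ for all $x\in X,b\in B$; (3) $\varphi(0,b,0,b')=0$ for all $b,b'\in B$; (4) writing $\varphi_{00}(x,b)=\varphi(x,0,0,b)$, for all $x,x'\in X$, $b,b'\in B$: $\varphi(x,b,x',b')=\varphi_{00}\big(\varphi(\varphi_{00}(x,b),b,\varphi_{00}(x',b'),b'),\,b+b'\big)$. $\mathbf{Act}(X,B)$ denotes the set of all maps $\varphi$ such that $(X,\varphi)$ is a $B$-action. *)

theory Defs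
  imports Main
begin

definition unitary_magma :: "'a set \<Rightarrow> ('a \<Rightarrow> 'a \<Rightarrow> 'a) \<Rightarrow> 'a \<Rightarrow> bool" where
  "unitary_magma A f z \<longleftrightarrow> z \<in> A \<and> (\<forall>a\<in>A. \<forall>b\<in>A. f a b \<in> A) \<and>
     (\<forall>b\<in>A. f b z = b \<and> f z b = b)"

definition magma_hom :: "'a set \<Rightarrow> ('a \<Rightarrow> 'a \<Rightarrow> 'a) \<Rightarrow> 'a \<Rightarrow>
     'c set \<Rightarrow> ('c \<Rightarrow> 'c \<Rightarrow> 'c) \<Rightarrow> 'c \<Rightarrow> ('a \<Rightarrow> 'c) \<Rightarrow> bool" where
  "magma_hom A f z A' f' z' h \<longleftrightarrow> (\<forall>a\<in>A. h a \<in> A') \<and>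
     (\<forall>a\<in>A. \<forall>b\<in>A. h (f a b) = f' (h a) (h b)) \<and> h z = z'"

text \<open>A candidate retraction point (A,k,q,s,p) from X (a type 'x) to B (a type 'b);
  the magma A is given by a carrier set, an operation and a unit.\<close>
record ('x, 'b, 'a) rpoint =
  carr :: "'a set"
  plus :: "'a \<Rightarrow> 'a \<Rightarrow> 'a"
  zer :: "'a"
  kk :: "'x \<Rightarrow> 'a"
  qq :: "'a \<Rightarrow> 'x"
  ss :: "'b \<Rightarrow> 'a"
  pp :: "'a \<Rightarrow> 'b"

text \<open>B = (UNIV :: 'b set, addB, zB).\<close>
definition retraction_point :: "('b \<Rightarrow> 'b \<Rightarrow> 'b) \<Rightarrow> 'b \<Rightarrow> ('x, 'b, 'a) rpoint \<Rightarrow> bool" where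
  "retraction_point addB zB R \<longleftrightarrow>
     unitary_magma (carr R) (plus R) (zer R) \<and>
     (\<forall>x. kk R x \<in> carr R) \<and>
     magma_hom UNIV addB zB (carr R) (plus R) (zer R) (ss R) \<and>
     magma_hom (carr R) (plus R) (zer R) UNIV addB zB (pp R) \<and>
     (\<forall>b. pp R (ss R b) = b) \<and>
     (\<forall>x. qq R (kk R x) = x) \<and>
     (\<forall>x. pp R (kk R x) = zB) \<and>
     (\<forall>b. qq R (ss R b) = qq R (zer R)) \<and>
     (\<forall>a\<in>carr R. plus R (kk R (qq R a)) (ss R (pp R a)) = a)"

definition rp_equiv :: "('x, 'b, 'a) rpoint \<Rightarrow> ('x, 'b, 'c) rpoint \<Rightarrow> bool" where
  "rp_equiv R R' \<longleftrightarrow> (\<exists>\<alpha> :: 'a \<Rightarrow> 'c.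
     magma_hom (carr R) (plus R) (zer R) (carr R') (plus R') (zer R') \<alpha> \<and>
     (\<forall>x. \<alpha> (kk R x) = kk R' x) \<and>
     (\<forall>b. \<alpha> (ss R b) = ss R' b) \<and>
     (\<forall>a\<in>carr R. qq R' (\<alpha> a) = qq R a))"

definition Phi :: "('x, 'b, 'a) rpoint \<Rightarrow> ('x \<Rightarrow> 'b \<Rightarrow> 'x \<Rightarrow> 'b \<Rightarrow> 'x)" where
  "Phi R = (\<lambda>x b x' b'. qq R (plus R (plus R (kk R x) (ss R b)) (plus R (kk R x') (ss R b'))))"

definition is_action :: "('b \<Rightarrow> 'b \<Rightarrow> 'b) \<Rightarrow> 'b \<Rightarrow> ('x \<Rightarrow> 'b \<Rightarrow> 'x \<Rightarrow> 'b \<Rightarrow> 'x) \<Rightarrow> bool" where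
  "is_action addB zB \<phi> \<longleftrightarrow> (\<exists>e::'x.
     (\<forall>x. \<phi> x zB e zB = x \<and> \<phi> e zB x zB = x) \<and>
     (\<forall>x b. \<phi> x b e zB = \<phi> x zB e b \<and> \<phi> x zB e b = \<phi> e zB x b) \<and>
     (\<forall>b b'. \<phi> e b e b' = e) \<and>
     (\<forall>x x' b b'. \<phi> x b x' b' =
        \<phi> (\<phi> (\<phi> x zB e b) b (\<phi> x' zB e b') b') zB e (addB b b')))"

definition Act :: "('b \<Rightarrow> 'b \<Rightarrow> 'b) \<Rightarrow> 'b \<Rightarrow> ('x \<Rightarrow> 'b \<Rightarrow> 'x \<Rightarrow> 'b \<Rightarrow> 'x) set" where
  "Act addB zB = {\<phi>. is_action addB zB \<phi>}"

end

theory Submission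
  imports Defs
begin

context
  fixes addB :: "'b \<Rightarrow> 'b \<Rightarrow> 'b" and zB :: 'b
begin

lemma rpD:
  assumes "retraction_point addB zB R"
  shows "zer R \<in> carr R" "\<And>a b. a \<in> carr R \<Longrightarrow> b \<in> carr R \<Longrightarrow> plus R a b \<in> carr R"
    "\<And>a. a \<in> carr R \<Longrightarrow> plus R a (zer R) = a" "\<And>a. a \<in> carr R \<Longrightarrow> plus R (zer R) a = a"
    "\<And>x. kk R x \<in> carr R" "\<And>b. ss R b \<in> carr R"
    "\<And>b b'. ss R (addB b b') = plus R (ss R b) (ss R b')" "ss R zB = zer R"
    "\<And>a b. a \<in> carr R \<Longrightarrow> b \<in> carr R \<Longrightarrow> pp R (plus R a b) = addB (pp R a) (pp R b)"
    "pp R (zer R) = zB"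
    "\<And>b. pp R (ss R b) = b" "\<And>x. qq R (kk R x) = x" "\<And>x. pp R (kk R x) = zB"
    "\<And>b. qq R (ss R b) = qq R (zer R)"
    "\<And>a. a \<in> carr R \<Longrightarrow> plus R (kk R (qq R a)) (ss R (pp R a)) = a"
  using assms unfolding retraction_point_def unitary_magma_def magma_hom_def by auto

lemma kq0:
  assumes "retraction_point addB zB R"
  shows "kk R (qq R (zer R)) = zer R"
  using rpD(15)[OF assms rpD(1)[OF assms]] rpD[OF assms] by simp

lemma pk_sum:
  assumes "retraction_point addB zB R" "unitary_magma (UNIV :: 'b set) addB zB"
  shows "pp R (plus R (kk R x) (ss R b)) = b"
  using rpD[OF assms(1)] assms(2) unfolding unitary_magma_def by simp

lemma ksq:
  assumes "retraction_point addB zB R" "unitary_magma (UNIV :: 'b set) addB zB"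
  shows "plus R (kk R (qq R (plus R (kk R x) (ss R b)))) (ss R b) = plus R (kk R x) (ss R b)"
proof -
  have "plus R (kk R x) (ss R b) \<in> carr R" using rpD[OF assms(1)] by simp
  from rpD(15)[OF assms(1) this] show ?thesis using pk_sum[OF assms] by simp
qed

lemma part1:
  assumes R: "retraction_point addB zB R" and B: "unitary_magma (UNIV :: 'b set) addB zB"
  shows "is_action addB zB (Phi R)"
proof -
  let ?e = "qq R (zer R)"
  note D = rpD[OF R] kq0[OF R]
  have B0: "\<And>b. addB b zB = b" "\<And>b. addB zB b = b" using B unfolding unitary_magma_def by auto
  have psi: "\<And>x b. Phi R x zB ?e b = qq R (plus R (kk R x) (ss R b))"
    unfolding Phi_def using D by simp
  have c4: "Phi R x b x' b' = Phi R (Phi R (Phi R x zB ?e b) b (Phi R x' zB ?e b') b') zB ?e (addB b b')"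
    for x b x' b'
  proof -
    let ?c = "plus R (plus R (kk R x) (ss R b)) (plus R (kk R x') (ss R b'))"
    have cc: "?c \<in> carr R" using D by simp
    have pc: "pp R ?c = addB b b'" using D pk_sum[OF R B] by simp
    have "Phi R (Phi R x zB ?e b) b (Phi R x' zB ?e b') b' = qq R ?c"
      unfolding psi unfolding Phi_def using ksq[OF R B] by simp
    then have "Phi R (Phi R (Phi R x zB ?e b) b (Phi R x' zB ?e b') b') zB ?e (addB b b')
       = qq R (plus R (kk R (qq R ?c)) (ss R (pp R ?c)))" unfolding psi pc by simp
    also have "\<dots> = qq R ?c" using D(15)[OF cc] by simp
    finally show ?thesis unfolding Phi_def by simp
  qed
  show ?thesis unfolding is_action_def
  proof (intro exI[of _ ?e] conjI allI)
    fix x show "Phi R x zB ?e zB = x" unfolding Phi_def using D by simp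
  next
    fix x show "Phi R ?e zB x zB = x" unfolding Phi_def using D by simp
  next
    fix x b show "Phi R x b ?e zB = Phi R x zB ?e b" unfolding Phi_def using D by simp
  next
    fix x b show "Phi R x zB ?e b = Phi R ?e zB x b" unfolding Phi_def using D by simp
  next
    fix b b' :: 'b
    have "Phi R ?e b ?e b' = qq R (plus R (ss R b) (ss R b'))" unfolding Phi_def using D by simp
    also have "\<dots> = qq R (ss R (addB b b'))" using D(7) by simp
    also have "\<dots> = ?e" using D(14) by simp
    finally show "Phi R ?e b ?e b' = ?e" .
  next
    fix x x' b b' show "Phi R x b x' b' = Phi R (Phi R (Phi R x zB ?e b) b (Phi R x' zB ?e b') b') zB ?e (addB b b')"
      by (rule c4)
  qed
qed

lemma Phi_basic:
  assumes R: "retraction_point addB zB R"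
  shows "Phi R x zB (qq R (zer R)) zB = x" "Phi R (qq R (zer R)) zB x zB = x"
    "Phi R x b (qq R (zer R)) zB = qq R (plus R (kk R x) (ss R b))"
  unfolding Phi_def using rpD[OF R] kq0[OF R] by simp_all

lemma part2a:
  assumes R: "retraction_point addB zB R" and R': "retraction_point addB zB R'"
    and E: "rp_equiv R R'"
  shows "Phi R = Phi R'"
proof -
  from E obtain \<alpha> where h: "magma_hom (carr R) (plus R) (zer R) (carr R') (plus R') (zer R') \<alpha>"
    and ak: "\<forall>x. \<alpha> (kk R x) = kk R' x" and as: "\<forall>b. \<alpha> (ss R b) = ss R' b"
    and aq: "\<forall>a\<in>carr R. qq R' (\<alpha> a) = qq R a" unfolding rp_equiv_def by blast
  note D = rpD[OF R]
  have hp: "\<And>a c. a \<in> carr R \<Longrightarrow> c \<in> carr R \<Longrightarrow> \<alpha> (plus R a c) = plus R' (\<alpha> a) (\<alpha> c)"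
    using h unfolding magma_hom_def by blast
  show ?thesis
  proof (intro ext)
    fix x b x' b'
    let ?c = "plus R (plus R (kk R x) (ss R b)) (plus R (kk R x') (ss R b'))"
    have cc: "?c \<in> carr R" using D by simp
    have "\<alpha> ?c = plus R' (plus R' (kk R' x) (ss R' b)) (plus R' (kk R' x') (ss R' b'))"
      using hp D ak as by simp
    then show "Phi R x b x' b' = Phi R' x b x' b'"
      unfolding Phi_def using aq cc by metis
  qed
qed

lemma part2b:
  assumes R: "retraction_point addB zB R" and R': "retraction_point addB zB R'"
    and B: "unitary_magma (UNIV :: 'b set) addB zB"
    and P: "Phi R = Phi R'"
  shows "rp_equiv R R'"
proof -
  note D = rpD[OF R] and D' = rpD[OF R']
  have ee: "qq R (zer R) = qq R' (zer R')"
  proof -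
    have "qq R' (zer R') = Phi R (qq R' (zer R')) zB (qq R (zer R)) zB" using Phi_basic(1)[OF R] by simp
    also have "\<dots> = qq R (zer R)" using Phi_basic(2)[OF R'] P by simp
    finally show ?thesis by simp
  qed
  define \<alpha> where "\<alpha> a = plus R' (kk R' (qq R a)) (ss R' (pp R a))" for a
  have hom: "magma_hom (carr R) (plus R) (zer R) (carr R') (plus R') (zer R') \<alpha>"
    unfolding magma_hom_def
  proof (intro conjI ballI)
    fix a assume "a \<in> carr R" show "\<alpha> a \<in> carr R'" unfolding \<alpha>_def using D' by simp
  next
    fix a c assume a: "a \<in> carr R" and c: "c \<in> carr R"
    let ?c' = "plus R' (\<alpha> a) (\<alpha> c)"
    have "qq R (plus R a c) = Phi R (qq R a) (pp R a) (qq R c) (pp R c)"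
      unfolding Phi_def using D(15)[OF a] D(15)[OF c] by simp
    also have "\<dots> = qq R' ?c'" unfolding P unfolding Phi_def \<alpha>_def ..
    finally have q1: "qq R (plus R a c) = qq R' ?c'" .
    have p1: "pp R' ?c' = addB (pp R a) (pp R c)"
      unfolding \<alpha>_def using D' pk_sum[OF R' B] by simp
    have cc: "?c' \<in> carr R'" unfolding \<alpha>_def using D' by simp
    have "\<alpha> (plus R a c) = plus R' (kk R' (qq R' ?c')) (ss R' (pp R' ?c'))"
      by (simp only: \<alpha>_def[of "plus R a c"] q1 p1 D(9)[OF a c])
    then show "\<alpha> (plus R a c) = ?c'" using D'(15)[OF cc] by simp
  next
    show "\<alpha> (zer R) = zer R'" unfolding \<alpha>_def using D D' kq0[OF R'] ee by simp
  qed
  show ?thesis unfolding rp_equiv_def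
  proof (intro exI[of _ \<alpha>] conjI allI ballI hom)
    fix x show "\<alpha> (kk R x) = kk R' x" unfolding \<alpha>_def using D D' by simp
  next
    fix b show "\<alpha> (ss R b) = ss R' b" unfolding \<alpha>_def using D D' kq0[OF R'] ee by simp
  next
    fix a assume a: "a \<in> carr R"
    have "qq R' (\<alpha> a) = Phi R' (qq R a) (pp R a) (qq R' (zer R')) zB"
      unfolding \<alpha>_def Phi_basic(3)[OF R'] ..
    also have "\<dots> = qq R a" unfolding P[symmetric] ee[symmetric] Phi_basic(3)[OF R] D(15)[OF a] ..
    finally show "qq R' (\<alpha> a) = qq R a" .
  qed
qed

lemma part3:
  assumes B: "unitary_magma (UNIV :: 'b set) addB zB" and A: "is_action addB zB \<phi>"
  shows "\<exists>R :: ('x, 'b, 'x \<times> 'b) rpoint. retraction_point addB zB R \<and> Phi R = \<phi>"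
proof -
  obtain e :: 'x where a1: "\<And>x. \<phi> x zB e zB = x" "\<And>x. \<phi> e zB x zB = x"
    and a2: "\<And>x b. \<phi> x b e zB = \<phi> x zB e b" "\<And>x b. \<phi> x zB e b = \<phi> e zB x b"
    and a3: "\<And>b b'. \<phi> e b e b' = e"
    and a4: "\<And>x x' b b'. \<phi> x b x' b' = \<phi> (\<phi> (\<phi> x zB e b) b (\<phi> x' zB e b') b') zB e (addB b b')"
    using A unfolding is_action_def by blast
  have B0: "\<And>b. addB b zB = b" "\<And>b. addB zB b = b" using B unfolding unitary_magma_def by auto
  have idem: "\<phi> (\<phi> x zB e b) zB e b = \<phi> x zB e b" for x b
  proof -
    have "\<phi> x zB e b = \<phi> (\<phi> (\<phi> x zB e zB) zB (\<phi> e zB e b) b) zB e (addB zB b)" by (rule a4)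
    also have "\<dots> = \<phi> (\<phi> x zB e b) zB e b" by (simp only: a1 a3 B0)
    finally show ?thesis by simp
  qed
  have key: "\<phi> (\<phi> x zB e b) b (\<phi> x' zB e b') b' = \<phi> x b x' b'" for x b x' b'
  proof -
    have "\<phi> (\<phi> x zB e b) b (\<phi> x' zB e b') b' = \<phi> (\<phi> (\<phi> (\<phi> x zB e b) zB e b) b (\<phi> (\<phi> x' zB e b') zB e b') b') zB e (addB b b')"
      by (rule a4)
    also have "\<dots> = \<phi> (\<phi> (\<phi> x zB e b) b (\<phi> x' zB e b') b') zB e (addB b b')" by (simp only: idem)
    also have "\<dots> = \<phi> x b x' b'" by (rule a4[symmetric])
    finally show ?thesis .
  qed
  have clos: "\<phi> (\<phi> x b x' b') zB e (addB b b') = \<phi> x b x' b'"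
    if "\<phi> x zB e b = x" "\<phi> x' zB e b' = x'" for x b x' b'
    using a4[of x b x' b'] that by metis
  define R :: "('x, 'b, 'x \<times> 'b) rpoint" where "R = \<lparr> carr = {(x,b). \<phi> x zB e b = x},
     plus = (\<lambda>(x,b) (x',b'). (\<phi> x b x' b', addB b b')), zer = (e, zB),
     kk = (\<lambda>x. (x, zB)), qq = fst, ss = (\<lambda>b. (e, b)), pp = snd \<rparr>"
  have Rs: "carr R = {(x,b). \<phi> x zB e b = x}" "plus R = (\<lambda>(x,b) (x',b'). (\<phi> x b x' b', addB b b'))"
    "zer R = (e, zB)" "kk R = (\<lambda>x. (x, zB))" "qq R = fst" "ss R = (\<lambda>b. (e, b))" "pp R = snd"
    by (simp_all add: R_def)
  have "retraction_point addB zB R"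
    unfolding retraction_point_def
  proof (intro conjI)
    show "unitary_magma (carr R) (plus R) (zer R)"
    proof -
      have u1: "plus R (x,b) (zer R) = (x,b) \<and> plus R (zer R) (x,b) = (x,b)" if "\<phi> x zB e b = x" for x b
        using that a2[of x b] B0 by (simp add: Rs)
      have c1: "plus R (x,b) (x',b') \<in> carr R" if "(x,b) \<in> carr R" "(x',b') \<in> carr R" for x b x' b'
        using that clos by (simp add: Rs)
      show ?thesis unfolding unitary_magma_def
        using u1 c1 by (auto simp: Rs a1)
    qed
  next
    show "\<forall>x. kk R x \<in> carr R" unfolding Rs using a1 by simp
  next
    show "magma_hom UNIV addB zB (carr R) (plus R) (zer R) (ss R)"
      unfolding Rs magma_hom_def using a3 a1 by simp
  next
    show "magma_hom (carr R) (plus R) (zer R) UNIV addB zB (pp R)"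
      unfolding Rs magma_hom_def by auto
  qed (auto simp: Rs B0 a1)
  moreover have "Phi R = \<phi>"
    unfolding Phi_def R_def by (simp add: fun_eq_iff B0 key)
  ultimately show ?thesis by blast
qed

end

theorem proposition5p3:
  fixes addB :: "'b \<Rightarrow> 'b \<Rightarrow> 'b" and zB :: 'b
  assumes "unitary_magma (UNIV :: 'b set) addB zB"
  shows "(\<forall>R :: ('x, 'b, 'a) rpoint. retraction_point addB zB R \<longrightarrow> Phi R \<in> Act addB zB)
    \<and> (\<forall>(R :: ('x, 'b, 'a) rpoint) (R' :: ('x, 'b, 'c) rpoint).
         retraction_point addB zB R \<and> retraction_point addB zB R' \<longrightarrow>
         (rp_equiv R R' \<longleftrightarrow> Phi R = Phi R'))
    \<and> (\<forall>\<phi> \<in> Act addB zB. \<exists>R :: ('x, 'b, 'x \<times> 'b) rpoint.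
         retraction_point addB zB R \<and> Phi R = \<phi>)
    \<and> bij_betw (\<lambda>C. the_elem (Phi ` C))
        ({R :: ('x, 'b, 'x \<times> 'b) rpoint. retraction_point addB zB R} //
         {(R, R'). retraction_point addB zB R \<and> retraction_point addB zB R' \<and> rp_equiv R R'})
        (Act addB zB)"
proof -
  note B = assms
  have P1: "\<forall>R :: ('x, 'b, 'a) rpoint. retraction_point addB zB R \<longrightarrow> Phi R \<in> Act addB zB"
    using part1[OF _ B] unfolding Act_def by blast
  have P2: "retraction_point addB zB R \<and> retraction_point addB zB R' \<longrightarrow>
         (rp_equiv R R' \<longleftrightarrow> Phi R = Phi R')" for R :: "('x, 'b, 'd) rpoint" and R' :: "('x, 'b, 'e) rpoint"
    using part2a part2b[OF _ _ B] by metis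
  have P3: "\<forall>\<phi> \<in> Act addB zB. \<exists>R :: ('x, 'b, 'x \<times> 'b) rpoint.
         retraction_point addB zB R \<and> Phi R = \<phi>"
    using part3[OF B] unfolding Act_def by blast
  define S where "S = {R :: ('x, 'b, 'x \<times> 'b) rpoint. retraction_point addB zB R}"
  define r where "r = {(R, R'). retraction_point addB zB R \<and> retraction_point addB zB R' \<and> rp_equiv (R :: ('x, 'b, 'x \<times> 'b) rpoint) (R' :: ('x, 'b, 'x \<times> 'b) rpoint)}"
  have r_eq: "r = {(R, R'). R \<in> S \<and> R' \<in> S \<and> Phi R = Phi R'}"
    unfolding r_def S_def using P2 by blast
  have cls: "r `` {R} = {R' \<in> S. Phi R' = Phi R}" if "R \<in> S" for R
    using that unfolding r_eq by auto
  have img: "the_elem (Phi ` (r `` {R})) = Phi R" if "R \<in> S" for R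
  proof -
    have "Phi ` (r `` {R}) = {Phi R}" unfolding cls[OF that] using that by auto
    then show ?thesis by simp
  qed
  have "bij_betw (\<lambda>C. the_elem (Phi ` C)) (S // r) (Act addB zB)"
    unfolding bij_betw_def
  proof
    show "inj_on (\<lambda>C. the_elem (Phi ` C)) (S // r)"
    proof (rule inj_onI)
      fix C D assume "C \<in> S // r" "D \<in> S // r" and eq: "the_elem (Phi ` C) = the_elem (Phi ` D)"
      then obtain R R' where R: "R \<in> S" "C = r `` {R}" and R': "R' \<in> S" "D = r `` {R'}"
        unfolding quotient_def by blast
      then have "Phi R = Phi R'" using eq img by simp
      then show "C = D" using R R' cls by simp
    qed
  next
    show "(\<lambda>C. the_elem (Phi ` C)) ` (S // r) = Act addB zB"
    proof
      show "(\<lambda>C. the_elem (Phi ` C)) ` (S // r) \<subseteq> Act addB zB"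
      proof
        fix y assume "y \<in> (\<lambda>C. the_elem (Phi ` C)) ` (S // r)"
        then obtain R where R: "R \<in> S" "y = the_elem (Phi ` (r `` {R}))"
          unfolding quotient_def by blast
        then show "y \<in> Act addB zB" using img part1[OF _ B] unfolding S_def Act_def by auto
      qed
    next
      show "Act addB zB \<subseteq> (\<lambda>C. the_elem (Phi ` C)) ` (S // r)"
      proof
        fix \<phi> :: "'x \<Rightarrow> 'b \<Rightarrow> 'x \<Rightarrow> 'b \<Rightarrow> 'x" assume "\<phi> \<in> Act addB zB"
        then obtain R where R: "R \<in> S" "Phi R = \<phi>" using P3 unfolding S_def by blast
        then have "r `` {R} \<in> S // r" unfolding quotient_def by blast
        then show "\<phi> \<in> (\<lambda>C. the_elem (Phi ` C)) ` (S // r)" using img[OF R(1)] R(2) by force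
      qed
    qed
  qed
  then have P4: "bij_betw (\<lambda>C. the_elem (Phi ` C))
        ({R :: ('x, 'b, 'x \<times> 'b) rpoint. retraction_point addB zB R} //
         {(R, R'). retraction_point addB zB R \<and> retraction_point addB zB R' \<and> rp_equiv R R'})
        (Act addB zB)" unfolding S_def r_def .
  show ?thesis
    apply (intro conjI)
       apply (rule P1)
      apply (intro allI)
      apply (rule P2)
     apply (rule P3)
    apply (rule P4)
    done
qed

end
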